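(* Let $\mathit{VI}$ be a finite set of variables with $\#\mathit{VI}=n$. If $j,k\in\mathbb{N}$ with $1\le j<k\le n$, then $\mathrm{MI}(\mathit{TSD}_k)\cap\mathit{TS}_j=\{\mathit{SG}\}$.
   Context: $\mathit{SG}=\wp(\mathit{VI})\setminus\{\emptyset\}$, $\mathit{SH}=\wp(\mathit{SG})$ ordered by inclusion. $\mathrm{tuples}_j(S)=\{T\subseteq S\mid\#T=j\}$, $\mathrm{tuples}_j(sh)=\bigcup_{S'\in sh}\mathrm{tuples}_j(S')$, $\rho_{\mathit{TS}_j}(sh)=\{S\in\mathit{SG}\mid\mathrm{tuples}_j(S)\subseteq\mathrm{tuples}_j(sh)\}$, $\mathit{TS}_j=\rho_{\mathit{TS}_j}(\mathit{SH})$. $\rho_{\mathit{TSD}_k}(sh)=\{\,S\in\mathit{SG}\mid \forall T\subseteq S:\ \#T<k\implies S=\bigcup\{U\in sh\mid T\subseteq U\subseteq S\}\,\}$, $\mathit{TSD}_k=\rho_{\mathit{TSD}_k}(\mathit{SH})$ (complete lattice under inclusion, meet = intersection). $\mathrm{MI}(C)$ denotes the meet-irreducible elements of a complete lattice $C$: $x$ such that $x=y\wedge z$ implies $x=y$ or $x=z$. *)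

theory Defs
  imports Main
begin

definition SG :: "'a set \<Rightarrow> 'a set set" where
  "SG VI = Pow VI - {{}}"

definition SH :: "'a set \<Rightarrow> 'a set set set" where
  "SH VI = Pow (SG VI)"

definition tuples :: "nat \<Rightarrow> 'a set \<Rightarrow> 'a set set" where
  "tuples j S = {T. T \<subseteq> S \<and> card T = j}"

definition tuples_sh :: "nat \<Rightarrow> 'a set set \<Rightarrow> 'a set set" where
  "tuples_sh j sh = (\<Union>S'\<in>sh. tuples j S')"

definition rho_TS :: "nat \<Rightarrow> 'a set \<Rightarrow> 'a set set \<Rightarrow> 'a set set" where
  "rho_TS j VI sh = {S \<in> SG VI. tuples j S \<subseteq> tuples_sh j sh}"

definition TS :: "nat \<Rightarrow> 'a set \<Rightarrow> 'a set set set" where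
  "TS j VI = rho_TS j VI ` SH VI"

definition rho_TSD :: "nat \<Rightarrow> 'a set \<Rightarrow> 'a set set \<Rightarrow> 'a set set" where
  "rho_TSD k VI sh = {S \<in> SG VI. \<forall>T. T \<subseteq> S \<and> card T < k \<longrightarrow>
       S = \<Union>{U \<in> sh. T \<subseteq> U \<and> U \<subseteq> S}}"

definition TSD :: "nat \<Rightarrow> 'a set \<Rightarrow> 'a set set set" where
  "TSD k VI = rho_TSD k VI ` SH VI"

definition is_meet :: "'b set set \<Rightarrow> 'b set \<Rightarrow> 'b set \<Rightarrow> 'b set \<Rightarrow> bool" where
  "is_meet C y z x \<longleftrightarrow> x \<in> C \<and> x \<subseteq> y \<and> x \<subseteq> z \<and>
     (\<forall>w\<in>C. w \<subseteq> y \<and> w \<subseteq> z \<longrightarrow> w \<subseteq> x)"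

definition MI :: "'b set set \<Rightarrow> 'b set set" where
  "MI C = {x \<in> C. \<forall>y\<in>C. \<forall>z\<in>C. is_meet C y z x \<longrightarrow> x = y \<or> x = z}"

end

theory Submission
  imports Defs
begin

lemma rho_TSD_sub: "rho_TSD k VI sh \<subseteq> SG VI"
  unfolding rho_TSD_def by auto

lemma rho_TSD_ext: "sh \<subseteq> SG VI \<Longrightarrow> sh \<subseteq> rho_TSD k VI sh"
  unfolding rho_TSD_def by blast

lemma rho_TSD_idem: "rho_TSD k VI (rho_TSD k VI sh) \<subseteq> rho_TSD k VI sh"
proof
  fix S assume S: "S \<in> rho_TSD k VI (rho_TSD k VI sh)"
  show "S \<in> rho_TSD k VI sh"
    unfolding rho_TSD_def
  proof (intro CollectI conjI allI impI)
    show "S \<in> SG VI" using S unfolding rho_TSD_def by auto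
    fix T assume T: "T \<subseteq> S \<and> card T < k"
    show "S = \<Union>{U \<in> sh. T \<subseteq> U \<and> U \<subseteq> S}"
    proof
      show "S \<subseteq> \<Union>{U \<in> sh. T \<subseteq> U \<and> U \<subseteq> S}"
      proof
        fix v assume v: "v \<in> S"
        have "S = \<Union>{U \<in> rho_TSD k VI sh. T \<subseteq> U \<and> U \<subseteq> S}"
          using S T unfolding rho_TSD_def by blast
        then obtain U where U: "U \<in> rho_TSD k VI sh" "T \<subseteq> U" "U \<subseteq> S" "v \<in> U"
          using v by blast
        have "U = \<Union>{U' \<in> sh. T \<subseteq> U' \<and> U' \<subseteq> U}"
          using U T unfolding rho_TSD_def by blast
        then obtain U' where "U' \<in> sh" "T \<subseteq> U'" "U' \<subseteq> U" "v \<in> U'"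
          using U(4) by blast
        then show "v \<in> \<Union>{U \<in> sh. T \<subseteq> U \<and> U \<subseteq> S}" using U(3) by blast
      qed
    qed blast
  qed
qed

lemma TSD_closed: "x \<in> TSD k VI \<Longrightarrow> rho_TSD k VI x = x \<and> x \<subseteq> SG VI"
proof -
  assume "x \<in> TSD k VI"
  then obtain sh where sh: "sh \<subseteq> SG VI" "x = rho_TSD k VI sh"
    unfolding TSD_def SH_def by auto
  have "x \<subseteq> SG VI" using sh rho_TSD_sub by blast
  moreover have "rho_TSD k VI x \<subseteq> x" using sh rho_TSD_idem by blast
  moreover have "x \<subseteq> rho_TSD k VI x" using rho_TSD_ext calculation(1) by blast
  ultimately show ?thesis by blast
qed

lemma closed_TSD: "x \<subseteq> SG VI \<Longrightarrow> rho_TSD k VI x \<subseteq> x \<Longrightarrow> x \<in> TSD k VI"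
proof -
  assume a: "x \<subseteq> SG VI" "rho_TSD k VI x \<subseteq> x"
  then have "rho_TSD k VI x = x" using rho_TSD_ext by blast
  then show ?thesis unfolding TSD_def SH_def using a by force
qed

lemma add_closed:
  assumes cl: "rho_TSD k VI x = x" and A: "A \<subseteq> VI"
  shows "rho_TSD k VI (insert A x) \<subseteq> insert A x \<union> {S. A \<subset> S \<and> S \<subseteq> VI}"
proof
  fix S assume S: "S \<in> rho_TSD k VI (insert A x)"
  show "S \<in> insert A x \<union> {S. A \<subset> S \<and> S \<subseteq> VI}"
  proof (cases "A \<subseteq> S")
    case True
    then show ?thesis using S unfolding rho_TSD_def SG_def by auto
  next
    case False
    have "\<And>T. {U \<in> insert A x. T \<subseteq> U \<and> U \<subseteq> S} = {U \<in> x. T \<subseteq> U \<and> U \<subseteq> S}"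
      using False by auto
    then have "S \<in> rho_TSD k VI x" using S unfolding rho_TSD_def by simp
    then show ?thesis using cl by auto
  qed
qed

theorem corollary4p5:
  fixes VI :: "'a set" and n j k :: nat
  assumes "finite VI" and "card VI = n"
    and "1 \<le> j" and "j < k" and "k \<le> n"
  shows "MI (TSD k VI) \<inter> TS j VI = {SG VI}"
proof -
  have VIne: "VI \<noteq> {}" using assms by auto
  have SGTSD: "SG VI \<in> TSD k VI"
    by (rule closed_TSD) (auto simp: rho_TSD_def)
  have SGTS: "SG VI \<in> TS j VI"
  proof -
    have "rho_TS j VI (SG VI) = SG VI"
      unfolding rho_TS_def tuples_sh_def by blast
    then show ?thesis unfolding TS_def SH_def by force
  qed
  have SGMI: "SG VI \<in> MI (TSD k VI)"
    unfolding MI_def is_meet_def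
  proof (intro CollectI conjI SGTSD ballI impI)
    fix y z assume "y \<in> TSD k VI" "z \<in> TSD k VI"
      "SG VI \<in> TSD k VI \<and> SG VI \<subseteq> y \<and> SG VI \<subseteq> z \<and>
       (\<forall>w\<in>TSD k VI. w \<subseteq> y \<and> w \<subseteq> z \<longrightarrow> w \<subseteq> SG VI)"
    then have "SG VI \<subseteq> y" "y \<subseteq> SG VI" using TSD_closed[of y k VI] by auto
    then show "SG VI = y \<or> SG VI = z" by (rule disjI1[OF subset_antisym])
  qed
  have main: "x = SG VI" if xMI: "x \<in> MI (TSD k VI)" and xTS: "x \<in> TS j VI" for x
  proof (rule ccontr)
    assume ne: "x \<noteq> SG VI"
    from xTS obtain sh where sh: "sh \<subseteq> SG VI" "x = rho_TS j VI sh"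
      unfolding TS_def SH_def by auto
    have xC: "x \<in> TSD k VI" using xMI unfolding MI_def by auto
    have clx: "rho_TSD k VI x = x" and xsub: "x \<subseteq> SG VI" using TSD_closed[OF xC] by auto
    have VInx: "VI \<notin> x"
    proof
      assume "VI \<in> x"
      then have tv: "tuples j VI \<subseteq> tuples_sh j sh" using sh unfolding rho_TS_def by auto
      have "SG VI \<subseteq> x"
      proof
        fix S assume "S \<in> SG VI"
        moreover then have "tuples j S \<subseteq> tuples j VI" unfolding SG_def tuples_def by auto
        ultimately show "S \<in> x" using tv sh unfolding rho_TS_def by auto
      qed
      then show False using ne xsub by blast
    qed
    have "VI \<in> SG VI" using VIne unfolding SG_def by auto
    then have "\<not> tuples j VI \<subseteq> tuples_sh j sh" using VInx sh unfolding rho_TS_def by auto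
    then obtain T0 where T0: "T0 \<subseteq> VI" "card T0 = j" "T0 \<notin> tuples_sh j sh"
      unfolding tuples_def by auto
    have T0nc: "\<not> T0 \<subseteq> U" if "U \<in> x" for U
    proof
      assume "T0 \<subseteq> U"
      then have "T0 \<in> tuples j U" using T0 unfolding tuples_def by auto
      moreover have "tuples j U \<subseteq> tuples_sh j sh" using that sh unfolding rho_TS_def by auto
      ultimately show False using T0 by auto
    qed
    have "T0 \<noteq> VI" using T0 assms by auto
    then obtain v where v: "v \<in> VI" "v \<notin> T0" using T0 by auto
    have T0ne: "T0 \<noteq> {}" using T0 assms by auto
    define A where "A = VI - {v}"
    have T0A: "T0 \<subseteq> A" using T0 v unfolding A_def by auto
    have Anx: "A \<notin> x" using T0nc T0A by blast
    have ASG: "A \<in> SG VI" using T0A T0ne unfolding A_def SG_def by auto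
    define y where "y = insert VI x"
    define z where "z = insert A x"
    have yC: "y \<in> TSD k VI"
    proof (rule closed_TSD)
      show "y \<subseteq> SG VI" using xsub \<open>VI \<in> SG VI\<close> unfolding y_def by auto
      show "rho_TSD k VI y \<subseteq> y" using add_closed[OF clx, of VI] unfolding y_def by auto
    qed
    have zC: "z \<in> TSD k VI"
    proof (rule closed_TSD)
      show "z \<subseteq> SG VI" using xsub ASG unfolding z_def by auto
      have "VI \<notin> rho_TSD k VI z"
      proof
        assume "VI \<in> rho_TSD k VI z"
        then have "VI = \<Union>{U \<in> z. T0 \<subseteq> U \<and> U \<subseteq> VI}"
          using T0 assms unfolding rho_TSD_def by auto
        then obtain U where U: "U \<in> z" "T0 \<subseteq> U" "v \<in> U" using v by blast
        then show False using T0nc unfolding z_def A_def by auto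
      qed
      moreover have "{S. A \<subset> S \<and> S \<subseteq> VI} = {VI}" unfolding A_def using v by auto
      ultimately show "rho_TSD k VI z \<subseteq> z"
        using add_closed[OF clx, of A] unfolding z_def A_def by auto
    qed
    have "is_meet (TSD k VI) y z x"
      unfolding is_meet_def using xC v unfolding y_def z_def A_def by auto
    then have "x = y \<or> x = z" using xMI yC zC unfolding MI_def by auto
    then show False using VInx Anx unfolding y_def z_def by auto
  qed
  show ?thesis using SGMI SGTS main by blast
qed

end
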